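(* Let $X$ be a Hermitian $N\times N$ matrix with spectral decomposition $X=\sum_j\lambda_jP_j$ (distinct eigenvalues $\lambda_j$, eigenprojectors $P_j$), and let $Z$ be any $N\times N$ complex matrix. Then $$\lim_{\kappa\to\infty}e^{-i\kappa X}e^{i(\kappa X+Z)}=e^{i\mathcal{P}_X(Z)},\qquad \mathcal{P}_X(Z):=\sum_jP_jZP_j.$$ *)

theory Defs
  imports "HOL-Analysis.Analysis" "Jordan_Normal_Form.Matrix"
begin

definition adj :: "complex mat \<Rightarrow> complex mat" where
  "adj A = mat (dim_col A) (dim_row A) (\<lambda>(i,j). cnj (A $$ (j,i)))"

definition hermitian_mat :: "complex mat \<Rightarrow> bool" where
  "hermitian_mat A \<longleftrightarrow> square_mat A \<and> adj A = A"

definition mexp :: "complex mat \<Rightarrow> complex mat" where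
  "mexp A = mat (dim_row A) (dim_col A)
      (\<lambda>(i,j). \<Sum>k. (A ^\<^sub>m k) $$ (i,j) / of_nat (fact k))"

definition msum :: "nat \<Rightarrow> ('i \<Rightarrow> complex mat) \<Rightarrow> 'i set \<Rightarrow> complex mat" where
  "msum N f I = mat N N (\<lambda>(a,b). \<Sum>j\<in>I. f j $$ (a,b))"

text \<open>Convergence of a family of N x N matrices (all norms are equivalent
  in finite dimension, so entrywise convergence is convergence).\<close>
definition mat_tendsto :: "nat \<Rightarrow> ('b \<Rightarrow> complex mat) \<Rightarrow> complex mat \<Rightarrow> 'b filter \<Rightarrow> bool" where
  "mat_tendsto N M L F \<longleftrightarrow>
     (\<forall>i<N. \<forall>j<N. ((\<lambda>x. M x $$ (i,j)) \<longlongrightarrow> L $$ (i,j)) F)"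

end

theory Submission
  imports Defs
begin

instantiation nat :: metric_space
begin
definition dist_nat :: "nat \<Rightarrow> nat \<Rightarrow> real" where "dist_nat x y = (if x = y then 0 else 1)"
definition uniformity_nat :: "(nat \<times> nat) filter" where
  "uniformity_nat = (INF e\<in>{0 <..}. principal {(x, y). dist x y < e})"
instance
proof
  fix x y z :: nat and U :: "nat set"
  show "(uniformity :: (nat \<times> nat) filter) = (INF e\<in>{0 <..}. principal {(x, y). dist (x::nat) y < e})" unfolding uniformity_nat_def by simp
  show "(dist x y = 0) = (x = y)" by (simp add: dist_nat_def)
  show "dist x y \<le> dist x z + dist y z" by (simp add: dist_nat_def)
  have le: "(uniformity :: (nat \<times> nat) filter) \<le> principal {(x, y). dist x y < 1/2}"
    unfolding uniformity_nat_def by (rule INF_lower) simp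
  have "\<forall>\<^sub>F (x', y) in uniformity. x' = x \<longrightarrow> y \<in> U" if "x \<in> U" for x
  proof (rule filter_leD[OF le])
    show "\<forall>\<^sub>F (x', y) in principal {(x, y). dist x y < 1 / 2}. x' = x \<longrightarrow> y \<in> U"
      using that by (auto simp: eventually_principal dist_nat_def split: if_splits)
  qed
  then show "open U = (\<forall>x\<in>U. \<forall>\<^sub>F (x', y) in uniformity. x' = x \<longrightarrow> y \<in> U)"
    by (simp add: open_discrete)
qed
end
instance bcontfun :: (metric_space, banach) banach ..

type_synonym vsp = "nat \<Rightarrow>\<^sub>C complex"

typedef opr = "UNIV :: (vsp \<Rightarrow>\<^sub>L vsp) set" morphisms Rop Aop by auto

setup_lifting type_definition_opr

instantiation opr :: real_normed_vector
begin
lift_definition norm_opr :: "opr \<Rightarrow> real" is norm .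
lift_definition minus_opr :: "opr \<Rightarrow> opr \<Rightarrow> opr" is "(-)" .
lift_definition plus_opr :: "opr \<Rightarrow> opr \<Rightarrow> opr" is "(+)" .
lift_definition uminus_opr :: "opr \<Rightarrow> opr" is "uminus" .
lift_definition zero_opr :: "opr" is "0" .
lift_definition scaleR_opr :: "real \<Rightarrow> opr \<Rightarrow> opr" is "scaleR" .
definition dist_opr :: "opr \<Rightarrow> opr \<Rightarrow> real" where "dist_opr a b = norm (a - b)"
definition uniformity_opr :: "(opr \<times> opr) filter" where
  "uniformity_opr = (INF e\<in>{0 <..}. principal {(x, y). dist x y < e})"
definition open_opr :: "opr set \<Rightarrow> bool" where
  "open_opr S = (\<forall>x\<in>S. \<forall>\<^sub>F (x', y) in uniformity. x' = x \<longrightarrow> y \<in> S)"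
definition sgn_opr :: "opr \<Rightarrow> opr" where "sgn_opr x = scaleR (inverse (norm x)) x"
instance
  apply standard
  unfolding dist_opr_def open_opr_def sgn_opr_def uniformity_opr_def
  apply (rule refl | (transfer, force simp: algebra_simps norm_triangle_ineq))+
  done
end

instantiation opr :: ring_1
begin
lift_definition times_opr :: "opr \<Rightarrow> opr \<Rightarrow> opr" is "(o\<^sub>L)" .
lift_definition one_opr :: "opr" is "id_blinfun" .
instance
proof
  fix a b c :: opr
  show "a * b * c = a * (b * c)" by transfer (auto intro!: blinfun_eqI)
  show "1 * a = a" by transfer (auto intro!: blinfun_eqI)
  show "a * 1 = a" by transfer (auto intro!: blinfun_eqI)
  show "(a + b) * c = a * c + b * c" by transfer (auto intro!: blinfun_eqI simp: blinfun.bilinear_simps)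
  show "a * (b + c) = a * b + a * c" by transfer (auto intro!: blinfun_eqI simp: blinfun.bilinear_simps)
  show "(0::opr) \<noteq> 1"
  proof transfer
    have c: "const_bcontfun (1::complex) \<noteq> (0::vsp)"
      by (metis const_bcontfun.rep_eq zero_bcontfun.rep_eq one_neq_zero)
    show "(0:: vsp \<Rightarrow>\<^sub>L vsp) \<noteq> id_blinfun"
    proof
      assume "(0:: vsp \<Rightarrow>\<^sub>L vsp) = id_blinfun"
      then have "blinfun_apply id_blinfun (const_bcontfun 1 :: vsp) = blinfun_apply 0 (const_bcontfun 1 :: vsp)" by (metis)
      then show False using c by simp
    qed
  qed
qed
end

lemma norm_opr_Rop: "norm x = norm (Rop x)" by transfer simp
lemma Rop_minus: "Rop (x - y) = Rop x - Rop y" by transfer simp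
lemma dist_opr_Rop: "dist x y = dist (Rop x) (Rop y)"
  by (simp add: dist_norm norm_opr_Rop Rop_minus)


instance opr :: real_normed_algebra_1
proof
  fix a :: real and x y :: opr
  show "a *\<^sub>R x * y = a *\<^sub>R (x * y)" by transfer (auto intro!: blinfun_eqI simp: blinfun.bilinear_simps)
  show "x * a *\<^sub>R y = a *\<^sub>R (x * y)" by transfer (auto intro!: blinfun_eqI simp: blinfun.bilinear_simps)
  show "norm (x * y) \<le> norm x * norm y" by transfer (rule norm_blinfun_compose)
  show "norm (1::opr) = 1"
  proof transfer
    have n1: "norm (const_bcontfun 1 :: vsp) = 1"
    proof (rule antisym)
      show "norm (const_bcontfun 1 :: vsp) \<le> 1" by (rule norm_bound) (simp add: const_bcontfun.rep_eq)
      have "norm (apply_bcontfun (const_bcontfun 1 :: vsp) 0) \<le> norm (const_bcontfun 1 :: vsp)" by (rule norm_bounded)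
      then show "1 \<le> norm (const_bcontfun 1 :: vsp)" by (simp add: const_bcontfun.rep_eq)
    qed
    have "norm (blinfun_apply id_blinfun (const_bcontfun 1 :: vsp)) \<le> norm (id_blinfun :: vsp \<Rightarrow>\<^sub>L vsp) * norm (const_bcontfun 1 :: vsp)"
      by (rule norm_blinfun)
    then have "1 \<le> norm (id_blinfun :: vsp \<Rightarrow>\<^sub>L vsp)" using n1 by (simp only: blinfun_apply_id_blinfun mult_1_right)
    then show "norm (id_blinfun :: vsp \<Rightarrow>\<^sub>L vsp) = 1" using norm_blinfun_id_le by (metis antisym)
  qed
qed

instance opr :: banach
proof
  fix X :: "nat \<Rightarrow> opr"
  assume "Cauchy X"
  then have "Cauchy (\<lambda>n. Rop (X n))" unfolding Cauchy_def dist_opr_Rop .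
  then have "convergent (\<lambda>n. Rop (X n))" by (rule Cauchy_convergent)
  then obtain L where L: "(\<lambda>n. Rop (X n)) \<longlonglongrightarrow> L" unfolding convergent_def by blast
  have "X \<longlonglongrightarrow> Aop L"
    using L unfolding tendsto_iff dist_opr_Rop by (simp add: Aop_inverse)
  then show "convergent X" unfolding convergent_def by blast
qed


lemma mvt_bound:
  fixes f f' :: "real \<Rightarrow> 'a::real_normed_vector"
  assumes t: "0 \<le> t" and der: "\<And>s. (f has_vector_derivative f' s) (at s)"
    and bd: "\<And>s. 0 \<le> s \<Longrightarrow> s \<le> t \<Longrightarrow> norm (f' s) \<le> L"
  shows "norm (f t - f 0) \<le> L * t"
proof (cases "t = 0")
  case True then show ?thesis by simp
next
  case False
  then have t0: "0 < t" using t by simp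
  have cont: "continuous_on {0..t} f"
    by (rule continuous_at_imp_continuous_on) (auto intro: has_vector_derivative_continuous[OF der])
  have "norm (f t - f 0) \<le> (\<lambda>x. L * x) t - (\<lambda>x. L * x) 0"
  proof (rule differentiable_bound_general[OF t0 cont _ der])
    show "continuous_on {0..t} (\<lambda>x. L * x)" by (intro continuous_intros)
    show "\<And>x. 0 < x \<Longrightarrow> x < t \<Longrightarrow> ((\<lambda>x. L * x) has_vector_derivative L) (at x)"
      by (auto intro!: derivative_eq_intros)
    show "\<And>x. 0 < x \<Longrightarrow> x < t \<Longrightarrow> norm (f' x) \<le> L" using bd by auto
  qed
  then show ?thesis by simp
qed

lemma exp_neg_mult:
  fixes x :: "'a::{real_normed_algebra_1, banach}"
  shows "exp (- x) * exp x = 1"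
  using exp_minus_inverse[of "- x"] by simp


lemma boot:
  fixes M Nn S a w :: "'a::{real_normed_algebra_1, banach}" and e C1 :: real
  assumes S: "S = 1 + e *\<^sub>R a" and rel: "M * S - S * Nn = e *\<^sub>R w" and e: "0 \<le> e"
    and bN1: "\<And>s. 0 \<le> s \<Longrightarrow> s \<le> 1 \<Longrightarrow> norm (exp (s *\<^sub>R Nn)) \<le> C1"
    and bN2: "\<And>s. 0 \<le> s \<Longrightarrow> s \<le> 1 \<Longrightarrow> norm (exp (s *\<^sub>R (- Nn))) \<le> C1"
    and small: "e * (norm w * C1 * C1 + norm a) \<le> 1/2"
  shows "norm (exp M) \<le> 2 * norm S * C1"
    and "norm (exp M * S * exp (- Nn) - S) \<le> e * (2 * norm S * C1) * norm w * C1"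
proof -
  have C1: "0 \<le> C1" using bN1[of 0] by simp
  define K where "K = Sup ((\<lambda>s. norm (exp (s *\<^sub>R M))) ` {0..1})"
  have bdd: "bdd_above ((\<lambda>s. norm (exp (s *\<^sub>R M))) ` {0..1})"
  proof (rule bdd_aboveI2)
    fix s :: real assume "s \<in> {0..1}"
    then have "norm (s *\<^sub>R M) \<le> norm M" by (auto intro: mult_left_le_one_le)
    then show "norm (exp (s *\<^sub>R M)) \<le> exp (norm M)"
      using norm_exp[of "s *\<^sub>R M"] by (meson exp_le_cancel_iff order_trans)
  qed
  have Kge: "norm (exp (s *\<^sub>R M)) \<le> K" if "0 \<le> s" "s \<le> 1" for s
    unfolding K_def by (rule cSup_upper[OF _ bdd]) (use that in auto)
  have K0: "0 \<le> K" using Kge[of 0] by simp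
  define Psi where "Psi = (\<lambda>s::real. exp (s *\<^sub>R M) * S * exp (s *\<^sub>R (- Nn)))"
  define Psi' where "Psi' = (\<lambda>s::real. exp (s *\<^sub>R M) * (e *\<^sub>R w) * exp (s *\<^sub>R (- Nn)))"
  have der: "(Psi has_vector_derivative Psi' s) (at s)" for s
  proof -
    have "(Psi has_vector_derivative
        (exp (s *\<^sub>R M) * S * ((- Nn) * exp (s *\<^sub>R (- Nn))) + (exp (s *\<^sub>R M) * 0 + exp (s *\<^sub>R M) * M * S) * exp (s *\<^sub>R (- Nn)))) (at s)"
      unfolding Psi_def
      by (intro has_vector_derivative_mult exp_scaleR_has_vector_derivative_right
          exp_scaleR_has_vector_derivative_left has_vector_derivative_const)
    moreover have "exp (s *\<^sub>R M) * S * ((- Nn) * exp (s *\<^sub>R (- Nn))) + (exp (s *\<^sub>R M) * 0 + exp (s *\<^sub>R M) * M * S) * exp (s *\<^sub>R (- Nn))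
        = exp (s *\<^sub>R M) * (M * S - S * Nn) * exp (s *\<^sub>R (- Nn))"
      by (simp add: algebra_simps)
    ultimately show ?thesis unfolding Psi'_def rel by simp
  qed
  have Psi0: "Psi 0 = S" unfolding Psi_def by simp
  have PsiS: "norm (Psi t - S) \<le> (K * (e * norm w) * C1) * t" if t: "0 \<le> t" "t \<le> 1" for t
  proof -
    have "norm (Psi t - Psi 0) \<le> (K * (e * norm w) * C1) * t"
    proof (rule mvt_bound[OF t(1) der])
      fix s :: real assume s: "0 \<le> s" "s \<le> t"
      have "norm (Psi' s) \<le> norm (exp (s *\<^sub>R M)) * norm (e *\<^sub>R w) * norm (exp (s *\<^sub>R (- Nn)))"
        unfolding Psi'_def by (rule order_trans[OF norm_mult_ineq mult_right_mono[OF norm_mult_ineq norm_ge_zero]])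
      also have "\<dots> \<le> K * (e * norm w) * C1"
        using Kge[of s] bN2[of s] s t e K0 by (intro mult_mono) (auto simp: abs_of_nonneg)
      finally show "norm (Psi' s) \<le> K * (e * norm w) * C1" .
    qed
    then show ?thesis using Psi0 by simp
  qed
  have expeq: "exp (t *\<^sub>R M) = Psi t * exp (t *\<^sub>R Nn) - e *\<^sub>R (exp (t *\<^sub>R M) * a)" for t
  proof -
    have "Psi t * exp (t *\<^sub>R Nn) = exp (t *\<^sub>R M) * S * (exp (- (t *\<^sub>R Nn)) * exp (t *\<^sub>R Nn))"
      unfolding Psi_def by (simp add: mult.assoc)
    also have "\<dots> = exp (t *\<^sub>R M) * S" by (simp add: exp_neg_mult)
    finally show ?thesis unfolding S by (simp add: algebra_simps)
  qed
  have bound_t: "norm (exp (t *\<^sub>R M)) \<le> norm S * C1 + K / 2" if t: "0 \<le> t" "t \<le> 1" for t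
  proof -
    have "norm (exp (t *\<^sub>R M)) \<le> norm (Psi t) * norm (exp (t *\<^sub>R Nn)) + e * (K * norm a)"
    proof -
      have "norm (exp (t *\<^sub>R M)) \<le> norm (Psi t * exp (t *\<^sub>R Nn)) + norm (e *\<^sub>R (exp (t *\<^sub>R M) * a))"
        using expeq[of t] norm_triangle_ineq4 by metis
      also have "norm (e *\<^sub>R (exp (t *\<^sub>R M) * a)) \<le> e * (K * norm a)"
        using e Kge[OF t] by (auto intro!: mult_left_mono order_trans[OF norm_mult_ineq] mult_right_mono)
      finally show ?thesis using norm_mult_ineq[of "Psi t" "exp (t *\<^sub>R Nn)"] by linarith
    qed
    also have "norm (Psi t) \<le> norm S + K * (e * norm w) * C1"
    proof -
      have "norm (Psi t) \<le> norm S + norm (Psi t - S)" by (metis norm_triangle_sub add.commute)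
      also have "(K * (e * norm w) * C1) * t \<le> K * (e * norm w) * C1"
        using t K0 e C1 by (intro mult_right_le_one_le) auto
      then have "norm (Psi t - S) \<le> K * (e * norm w) * C1" using PsiS[OF t] by linarith
      finally show ?thesis by simp
    qed
    then have "norm (Psi t) * norm (exp (t *\<^sub>R Nn)) \<le> (norm S + K * (e * norm w) * C1) * C1"
      using bN1[OF t] C1 K0 e by (intro mult_mono) auto
    finally have "norm (exp (t *\<^sub>R M)) \<le> norm S * C1 + K * (e * (norm w * C1 * C1 + norm a))"
      by (simp add: algebra_simps)
    also have "K * (e * (norm w * C1 * C1 + norm a)) \<le> K * (1/2)"
      using small K0 by (intro mult_left_mono) auto
    finally show ?thesis by simp
  qed
  have "Sup ((\<lambda>s. norm (exp (s *\<^sub>R M))) ` {0..1}) \<le> norm S * C1 + K / 2"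
    by (rule cSup_least) (use bound_t in auto)
  then have "K \<le> norm S * C1 + K / 2" by (simp only: K_def[symmetric])
  then have K2: "K \<le> 2 * norm S * C1" by simp
  show "norm (exp M) \<le> 2 * norm S * C1" using Kge[of 1] K2 by simp
  have "norm (Psi 1 - S) \<le> K * (e * norm w) * C1" using PsiS[of 1] by simp
  also have "\<dots> \<le> (2 * norm S * C1) * (e * norm w) * C1"
    using K2 e C1 by (intro mult_right_mono) auto
  finally show "norm (exp M * S * exp (- Nn) - S) \<le> e * (2 * norm S * C1) * norm w * C1"
    unfolding Psi_def by (simp add: algebra_simps)
qed


lemma norm_mult3: "norm ((a::'a::real_normed_algebra) * b * c) \<le> norm a * norm b * norm c"
  by (rule order_trans[OF norm_mult_ineq mult_right_mono[OF norm_mult_ineq norm_ge_zero]])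

lemma norm_mult4: "norm ((a::'a::real_normed_algebra) * b * c * d) \<le> norm a * norm b * norm c * norm d"
  by (rule order_trans[OF norm_mult_ineq mult_right_mono[OF norm_mult3 norm_ge_zero]])

lemma grp_aux: "(u::'a::ab_group_add) = p + c - q \<Longrightarrow> u - c = p - q"
  by simp

lemma core:
  fixes x z d a :: "'a::{real_normed_algebra_1, banach}" and C :: real
  assumes xd: "x * d = d * x" and bnd: "\<And>t. norm (exp (t *\<^sub>R x)) \<le> C"
    and rel: "x * a - a * x = d - z"
  shows "((\<lambda>\<kappa>. exp (- \<kappa> *\<^sub>R x) * exp (\<kappa> *\<^sub>R x + z)) \<longlongrightarrow> exp d) at_top"
proof -
  define C1 where "C1 = C * exp (norm d)"
  define w where "w = z * a - a * d"
  define k0 where "k0 = max 1 (2 * (norm w * C1 * C1 + norm a))"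
  define KK where "KK = 2 * (1 + norm a) * C1"
  define B where "B = C * (KK * norm w * C1 + norm a) * C * exp (norm d) + C * KK * norm a"
  have C0: "0 \<le> C" using bnd[of 0] by simp
  have C10: "0 \<le> C1" unfolding C1_def using C0 by simp
  have KK0: "0 \<le> KK" unfolding KK_def using C10 by simp
  have expd: "norm (exp (s *\<^sub>R d)) \<le> exp (norm d)" if "\<bar>s\<bar> \<le> 1" for s
  proof -
    have "norm (s *\<^sub>R d) \<le> norm d" using that by (simp add: mult_left_le_one_le)
    then show ?thesis using norm_exp[of "s *\<^sub>R d"] by (meson exp_le_cancel_iff order_trans)
  qed
  have expsplit: "exp (r *\<^sub>R x + s *\<^sub>R d) = exp (r *\<^sub>R x) * exp (s *\<^sub>R d)" for r s
    by (rule exp_add_commuting) (simp add: xd mult_scaleR_left mult_scaleR_right)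
  have main: "norm (exp (- \<kappa> *\<^sub>R x) * exp (\<kappa> *\<^sub>R x + z) - exp d) \<le> B * (1 / \<kappa>)"
    if k: "\<kappa> \<ge> k0" for \<kappa> :: real
  proof -
    have k1: "\<kappa> \<ge> 1" using k unfolding k0_def by simp
    define e where "e = 1 / \<kappa>"
    have e0: "0 \<le> e" "e \<le> 1" using k1 unfolding e_def by auto
    have ek: "e * \<kappa> = 1" using k1 unfolding e_def by simp
    define S where "S = 1 + e *\<^sub>R a"
    define M where "M = \<kappa> *\<^sub>R x + z"
    define Nn where "Nn = \<kappa> *\<^sub>R x + d"
    have relMS: "M * S - S * Nn = e *\<^sub>R w"
    proof -
      have "M * S - S * Nn = (z - d) + (e * \<kappa>) *\<^sub>R (x * a - a * x) + e *\<^sub>R (z * a - a * d)"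
        unfolding M_def S_def Nn_def by (simp add: algebra_simps)
      then show ?thesis unfolding ek rel w_def by simp
    qed
    have bN1: "norm (exp (s *\<^sub>R Nn)) \<le> C1" if "0 \<le> s" "s \<le> 1" for s
    proof -
      have "s *\<^sub>R Nn = (s * \<kappa>) *\<^sub>R x + s *\<^sub>R d"
        unfolding Nn_def by (simp add: algebra_simps)
      then have "exp (s *\<^sub>R Nn) = exp ((s * \<kappa>) *\<^sub>R x) * exp (s *\<^sub>R d)"
        by (simp only: expsplit)
      also have "norm \<dots> \<le> C * exp (norm d)"
        using that by (intro order_trans[OF norm_mult_ineq] mult_mono bnd expd C0) auto
      finally show ?thesis unfolding C1_def .
    qed
    have bN2: "norm (exp (s *\<^sub>R (- Nn))) \<le> C1" if "0 \<le> s" "s \<le> 1" for s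
    proof -
      have "s *\<^sub>R (- Nn) = (- s * \<kappa>) *\<^sub>R x + (- s) *\<^sub>R d"
        unfolding Nn_def by (simp add: algebra_simps)
      then have "exp (s *\<^sub>R (- Nn)) = exp ((- s * \<kappa>) *\<^sub>R x) * exp ((- s) *\<^sub>R d)"
        by (simp only: expsplit)
      also have "norm \<dots> \<le> C * exp (norm d)"
        using that by (intro order_trans[OF norm_mult_ineq] mult_mono bnd expd C0) auto
      finally show ?thesis unfolding C1_def .
    qed
    have small: "e * (norm w * C1 * C1 + norm a) \<le> 1/2"
    proof -
      have "2 * (norm w * C1 * C1 + norm a) \<le> \<kappa>" using k unfolding k0_def by simp
      then show ?thesis unfolding e_def using k1 by (simp add: field_simps)
    qed
    have nS: "norm S \<le> 1 + norm a"
    proof -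
      have "norm S \<le> 1 + norm (e *\<^sub>R a)" unfolding S_def by (metis norm_one norm_triangle_ineq)
      also have "norm (e *\<^sub>R a) \<le> norm a" using e0 by (simp add: mult_left_le_one_le)
      finally show ?thesis by simp
    qed
    note bt = boot[OF S_def relMS e0(1) bN1 bN2 small]
    have eM: "norm (exp M) \<le> KK"
      using bt(1) nS C10 unfolding KK_def by (meson mult_right_mono mult_left_mono order_trans zero_le_numeral)
    define Psi1 where "Psi1 = exp M * S * exp (- Nn)"
    have P1: "norm (Psi1 - S) \<le> e * KK * norm w * C1"
    proof -
      have "e * (2 * norm S * C1) * norm w * C1 \<le> e * KK * norm w * C1"
        using nS C10 e0 unfolding KK_def by (intro mult_right_mono mult_left_mono) auto
      then show ?thesis using bt(2) unfolding Psi1_def by linarith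
    qed
    have eNn: "exp Nn = exp (\<kappa> *\<^sub>R x) * exp d"
      using expsplit[of \<kappa> 1] unfolding Nn_def by simp
    have eMeq: "exp M = Psi1 * exp Nn - e *\<^sub>R (exp M * a)"
    proof -
      have "Psi1 * exp Nn = exp M * S * (exp (- Nn) * exp Nn)" unfolding Psi1_def by (simp add: mult.assoc)
      also have "\<dots> = exp M * S" by (simp add: exp_neg_mult)
      finally show ?thesis unfolding S_def by (simp add: algebra_simps)
    qed
    define U where "U = exp (- \<kappa> *\<^sub>R x)"
    define V where "V = exp (\<kappa> *\<^sub>R x)"
    have UV: "U * V = 1" unfolding U_def V_def using exp_neg_mult[of "\<kappa> *\<^sub>R x"] by simp
    have nU: "norm U \<le> C" unfolding U_def by (rule bnd)
    have nV: "norm V \<le> C" unfolding V_def by (rule bnd)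
    have decomp: "U * exp M - exp d = U * ((Psi1 - S) + e *\<^sub>R a) * V * exp d - e *\<^sub>R (U * exp M * a)"
    proof -
      have "U * exp M = U * Psi1 * V * exp d - e *\<^sub>R (U * exp M * a)"
        by (subst eMeq) (simp add: eNn V_def algebra_simps)
      moreover have "U * (S - e *\<^sub>R a) * V * exp d = exp d" unfolding S_def
        by (simp add: UV)
      moreover have "U * Psi1 * V * exp d = U * ((Psi1 - S) + e *\<^sub>R a) * V * exp d + U * (S - e *\<^sub>R a) * V * exp d"
        by (simp add: algebra_simps)
      ultimately have "U * exp M = U * ((Psi1 - S) + e *\<^sub>R a) * V * exp d + exp d - e *\<^sub>R (U * exp M * a)"
        by simp
      then show ?thesis by (simp only: grp_aux)
    qed
    have n1: "norm (U * ((Psi1 - S) + e *\<^sub>R a) * V * exp d) \<le> C * (e * KK * norm w * C1 + e * norm a) * C * exp (norm d)"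
    proof -
      have a1: "norm ((Psi1 - S) + e *\<^sub>R a) \<le> e * KK * norm w * C1 + e * norm a"
      proof -
        have "norm ((Psi1 - S) + e *\<^sub>R a) \<le> norm (Psi1 - S) + norm (e *\<^sub>R a)" by (rule norm_triangle_ineq)
        moreover have "norm (e *\<^sub>R a) = e * norm a" using e0 by simp
        ultimately show ?thesis using P1 by linarith
      qed
      have "norm (U * ((Psi1 - S) + e *\<^sub>R a) * V * exp d) \<le> norm U * norm ((Psi1 - S) + e *\<^sub>R a) * norm V * norm (exp d)"
        by (rule norm_mult4)
      also have "\<dots> \<le> C * (e * KK * norm w * C1 + e * norm a) * C * exp (norm d)"
        using nU nV a1 norm_exp[of d] C0 KK0 C10 e0 by (intro mult_mono) auto
      finally show ?thesis .
    qed
    have n2: "norm (e *\<^sub>R (U * exp M * a)) \<le> e * (C * KK * norm a)"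
    proof -
      have "norm (U * exp M * a) \<le> norm U * norm (exp M) * norm a"
        by (rule norm_mult3)
      also have "\<dots> \<le> C * KK * norm a" using nU eM C0 KK0 by (intro mult_mono) auto
      finally show ?thesis using e0 by (simp add: mult_left_mono)
    qed
    have "norm (U * exp M - exp d) \<le> C * (e * KK * norm w * C1 + e * norm a) * C * exp (norm d) + e * (C * KK * norm a)"
      unfolding decomp using n1 n2 norm_triangle_ineq4 by (meson add_mono order_trans)
    also have "\<dots> = B * e" unfolding B_def by (simp add: algebra_simps)
    finally show ?thesis unfolding U_def M_def e_def by simp
  qed
  have "((\<lambda>\<kappa>. exp (- \<kappa> *\<^sub>R x) * exp (\<kappa> *\<^sub>R x + z) - exp d) \<longlongrightarrow> 0) at_top"
  proof (rule Lim_null_comparison)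
    show "\<forall>\<^sub>F \<kappa> in at_top. norm (exp (- \<kappa> *\<^sub>R x) * exp (\<kappa> *\<^sub>R x + z) - exp d) \<le> B * (1 / \<kappa>)"
      using eventually_ge_at_top[of k0] by (rule eventually_mono) (rule main)
    show "((\<lambda>\<kappa>::real. B * (1 / \<kappa>)) \<longlongrightarrow> 0) at_top"
      by (intro tendsto_mult_right_zero tendsto_divide_0[OF tendsto_const]
          filterlim_at_top_imp_at_infinity[OF filterlim_ident])
  qed
  then show ?thesis by (rule LIM_zero_cancel)
qed


definition mvf :: "nat \<Rightarrow> (nat \<Rightarrow> nat \<Rightarrow> complex) \<Rightarrow> vsp \<Rightarrow> nat \<Rightarrow> complex" where
  "mvf N g v = (\<lambda>i. if i < N then (\<Sum>l<N. g i l * apply_bcontfun v l) else 0)"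

lemma mvf_bc: "mvf N g v \<in> bcontfun"
proof -
  have "range (mvf N g v) \<subseteq> insert 0 ((\<lambda>i. \<Sum>l<N. g i l * apply_bcontfun v l) ` {..<N})"
    unfolding mvf_def by auto
  moreover have "bounded (insert 0 ((\<lambda>i. \<Sum>l<N. g i l * apply_bcontfun v l) ` {..<N}))"
    by (intro finite_imp_bounded) auto
  ultimately have "bounded (range (mvf N g v))" by (rule bounded_subset[rotated])
  then show ?thesis unfolding bcontfun_def by simp
qed

definition bop :: "nat \<Rightarrow> (nat \<Rightarrow> nat \<Rightarrow> complex) \<Rightarrow> vsp \<Rightarrow> vsp" where
  "bop N g v = Bcontfun (mvf N g v)"

lemma bop_apply: "apply_bcontfun (bop N g v) = mvf N g v"
  by (simp add: bop_def Bcontfun_inverse mvf_bc)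

lemma norm_bop: "norm (bop N g v) \<le> norm v * (\<Sum>i<N. \<Sum>l<N. cmod (g i l))"
proof (rule norm_bound)
  fix i
  show "norm (apply_bcontfun (bop N g v) i) \<le> norm v * (\<Sum>i<N. \<Sum>l<N. cmod (g i l))"
  proof (cases "i < N")
    case True
    have "norm (\<Sum>l<N. g i l * apply_bcontfun v l) \<le> (\<Sum>l<N. cmod (g i l) * norm v)"
      by (rule order_trans[OF norm_sum sum_mono])
         (simp add: norm_mult mult_left_mono norm_bounded)
    also have "\<dots> = norm v * (\<Sum>l<N. cmod (g i l))" by (simp add: sum_distrib_left mult.commute)
    also have "\<dots> \<le> norm v * (\<Sum>i<N. \<Sum>l<N. cmod (g i l))"
      using True by (intro mult_left_mono member_le_sum) (auto intro: sum_nonneg)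
    finally show ?thesis using True by (simp add: bop_apply mvf_def)
  next
    case False
    then show ?thesis by (simp add: bop_apply mvf_def sum_nonneg)
  qed
qed

lemma bl_bop: "bounded_linear (bop N g)"
proof (rule bounded_linear_intro)
  fix v w :: vsp and r :: real
  show "bop N g (v + w) = bop N g v + bop N g w"
    by (rule bcontfun_eqI) (simp add: bop_apply mvf_def sum.distrib distrib_left)
  show "bop N g (r *\<^sub>R v) = r *\<^sub>R bop N g v"
    by (rule bcontfun_eqI) (simp add: bop_apply mvf_def scaleR_conv_of_real sum_distrib_left algebra_simps)
  show "norm (bop N g v) \<le> norm v * (\<Sum>i<N. \<Sum>l<N. cmod (g i l))" by (rule norm_bop)
qed

definition embf :: "nat \<Rightarrow> (nat \<Rightarrow> nat \<Rightarrow> complex) \<Rightarrow> opr" where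
  "embf N g = Aop (Blinfun (bop N g))"

definition ap :: "opr \<Rightarrow> vsp \<Rightarrow> nat \<Rightarrow> complex" where
  "ap T v i = apply_bcontfun (blinfun_apply (Rop T) v) i"

lemma Rop_embf: "Rop (embf N g) = Blinfun (bop N g)"
  by (simp add: embf_def Aop_inverse)

lemma ap_embf: "ap (embf N g) v i = (if i < N then \<Sum>l<N. g i l * apply_bcontfun v l else 0)"
  by (simp add: ap_def Rop_embf bounded_linear_Blinfun_apply[OF bl_bop] bop_apply mvf_def)

lemma ap_embf': "apply_bcontfun (blinfun_apply (Rop (embf N g)) v) i = (if i < N then \<Sum>l<N. g i l * apply_bcontfun v l else 0)"
  using ap_embf unfolding ap_def .

lemma opr_eqI: "(\<And>v i. ap S v i = ap T v i) \<Longrightarrow> S = T"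
  unfolding ap_def by (metis Rop_inject blinfun_eqI bcontfun_eqI)

lemma ap_add: "ap (S + T) v i = ap S v i + ap T v i"
  by (simp add: ap_def plus_opr.rep_eq plus_blinfun.rep_eq)

lemma ap_scaleR: "ap (r *\<^sub>R S) v i = of_real r * ap S v i"
  unfolding ap_def scaleR_opr.rep_eq scaleR_blinfun.rep_eq scaleR_bcontfun.rep_eq
  by (simp add: scaleR_conv_of_real)

lemma ap_zero: "ap 0 v i = 0"
  by (simp add: ap_def zero_opr.rep_eq)

lemma ap_one: "ap 1 v i = apply_bcontfun v i"
  by (simp add: ap_def one_opr.rep_eq)

lemma ap_mult: "ap (S * T) v i = ap S (blinfun_apply (Rop T) v) i"
  by (simp add: ap_def times_opr.rep_eq)

lemma embf_add: "embf N (\<lambda>i j. g i j + h i j) = embf N g + embf N h"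
  by (rule opr_eqI) (simp add: ap_add ap_embf sum.distrib distrib_right)

lemma embf_scaleR: "embf N (\<lambda>i j. of_real r * g i j) = r *\<^sub>R embf N g"
  by (rule opr_eqI) (simp add: ap_scaleR ap_embf sum_distrib_left algebra_simps)

lemma embf_zero: "embf N (\<lambda>i j. 0) = 0"
  by (rule opr_eqI) (simp add: ap_zero ap_embf)

lemma embf_cong: "(\<And>i j. i < N \<Longrightarrow> j < N \<Longrightarrow> g i j = h i j) \<Longrightarrow> embf N g = embf N h"
  by (rule opr_eqI) (simp add: ap_embf)

lemma embf_mult: "embf N g * embf N h = embf N (\<lambda>i j. \<Sum>l<N. g i l * h l j)"
proof (rule opr_eqI)
  fix v i
  have "ap (embf N g * embf N h) v i = (if i < N then \<Sum>l<N. g i l * apply_bcontfun (blinfun_apply (Rop (embf N h)) v) l else 0)"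
    unfolding ap_mult ap_embf ..
  also have "\<dots> = (if i < N then \<Sum>l<N. g i l * (\<Sum>r<N. h l r * apply_bcontfun v r) else 0)"
    by (intro if_cong refl sum.cong) (simp add: ap_embf')
  also have "\<dots> = (if i < N then \<Sum>r<N. (\<Sum>l<N. g i l * h l r) * apply_bcontfun v r else 0)"
  proof -
    have "(\<Sum>l<N. g i l * (\<Sum>r<N. h l r * apply_bcontfun v r)) = (\<Sum>l<N. \<Sum>r<N. g i l * h l r * apply_bcontfun v r)"
      by (simp only: sum_distrib_left mult.assoc)
    also have "\<dots> = (\<Sum>r<N. \<Sum>l<N. g i l * h l r * apply_bcontfun v r)" by (rule sum.swap)
    also have "\<dots> = (\<Sum>r<N. (\<Sum>l<N. g i l * h l r) * apply_bcontfun v r)" by (simp only: sum_distrib_right)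
    finally show ?thesis by simp
  qed
  also have "\<dots> = ap (embf N (\<lambda>i j. \<Sum>l<N. g i l * h l j)) v i"
    unfolding ap_embf ..
  finally show "ap (embf N g * embf N h) v i = ap (embf N (\<lambda>i j. \<Sum>l<N. g i l * h l j)) v i" .
qed

lemma embf_sum: "embf N (\<lambda>i j. \<Sum>k\<in>K. g k i j) = (\<Sum>k\<in>K. embf N (g k))"
proof (cases "finite K")
  case True
  then show ?thesis
  proof (induction K rule: finite_induct)
    case empty then show ?case by (simp add: embf_zero)
  next
    case (insert x F)
    have "embf N (\<lambda>i j. \<Sum>k\<in>insert x F. g k i j) = embf N (\<lambda>i j. g x i j + (\<Sum>k\<in>F. g k i j))"
      using insert by simp
    also have "\<dots> = embf N (g x) + embf N (\<lambda>i j. \<Sum>k\<in>F. g k i j)" by (rule embf_add)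
    finally show ?case using insert by simp
  qed
next
  case False
  then show ?thesis by (simp add: embf_zero)
qed

lemma embf_uminus: "embf N (\<lambda>i j. - g i j) = - embf N g"
  using embf_scaleR[of N "-1" g] by simp

lemma embf_diff: "embf N (\<lambda>i j. g i j - h i j) = embf N g - embf N h"
  using embf_add[of N g "\<lambda>i j. - h i j"] embf_uminus[of N h] by simp

lemma norm_embf: "norm (embf N g) \<le> (\<Sum>i<N. \<Sum>l<N. cmod (g i l))"
proof -
  have "norm (Blinfun (bop N g)) \<le> (\<Sum>i<N. \<Sum>l<N. cmod (g i l))"
  proof (rule norm_blinfun_bound)
    show "0 \<le> (\<Sum>i<N. \<Sum>l<N. cmod (g i l))" by (simp add: sum_nonneg)
    fix v
    show "norm (blinfun_apply (Blinfun (bop N g)) v) \<le> (\<Sum>i<N. \<Sum>l<N. cmod (g i l)) * norm v"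
      unfolding bounded_linear_Blinfun_apply[OF bl_bop] using norm_bop[of N g v] by (simp only: mult.commute)
  qed
  then show ?thesis by (simp add: norm_opr_Rop Rop_embf)
qed


definition dlt :: "nat \<Rightarrow> vsp" where "dlt j = Bcontfun (\<lambda>l. if l = j then 1 else 0)"

lemma dlt_apply: "apply_bcontfun (dlt j) l = (if l = j then 1 else 0)"
proof -
  have "(\<lambda>l::nat. if l = j then (1::complex) else 0) \<in> bcontfun"
    by (rule bcontfun_normI[where b=1]) auto
  then show ?thesis by (simp add: dlt_def Bcontfun_inverse)
qed

lemma norm_dlt: "norm (dlt j) \<le> 1"
  by (rule norm_bound) (simp add: dlt_apply)

definition ent :: "nat \<Rightarrow> nat \<Rightarrow> opr \<Rightarrow> complex" where "ent i j T = ap T (dlt j) i"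

lemma mult_delta_aux: "(a::complex) * (if P then 1 else 0) = (if P then a else 0)" by simp

lemma ent_embf: "i < N \<Longrightarrow> j < N \<Longrightarrow> ent i j (embf N g) = g i j"
  by (simp add: ent_def ap_embf dlt_apply mult_delta_aux)

lemma ent_one: "ent i j 1 = (if i = j then 1 else 0)"
  by (simp add: ent_def ap_one dlt_apply)

lemma ent_add: "ent i j (S + T) = ent i j S + ent i j T"
  by (simp add: ent_def ap_add)

lemma bl_ent: "bounded_linear (ent i j)"
proof (rule bounded_linear_intro[where K=1])
  fix S T :: opr and r :: real
  show "ent i j (S + T) = ent i j S + ent i j T" by (rule ent_add)
  show "ent i j (r *\<^sub>R S) = r *\<^sub>R ent i j S" unfolding ent_def ap_scaleR by (simp add: scaleR_conv_of_real)
  have "norm (ent i j S) \<le> norm (blinfun_apply (Rop S) (dlt j))"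
    unfolding ent_def ap_def by (rule norm_bounded)
  also have "\<dots> \<le> norm (Rop S) * norm (dlt j)" by (rule norm_blinfun)
  also have "\<dots> \<le> norm (Rop S) * 1" using norm_dlt by (intro mult_left_mono) auto
  finally show "norm (ent i j S) \<le> norm S * 1" by (simp add: norm_opr_Rop)
qed

definition emb :: "nat \<Rightarrow> complex mat \<Rightarrow> opr" where "emb N A = embf N (\<lambda>i j. A $$ (i,j))"

lemma emb_mult:
  assumes "A \<in> carrier_mat N N" "B \<in> carrier_mat N N"
  shows "emb N (A * B) = emb N A * emb N B"
  unfolding emb_def embf_mult
  by (rule embf_cong) (use assms in \<open>auto simp: scalar_prod_def lessThan_atLeast0 intro!: sum.cong\<close>)

lemma emb_add:
  assumes "A \<in> carrier_mat N N" "B \<in> carrier_mat N N"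
  shows "emb N (A + B) = emb N A + emb N B"
  unfolding emb_def embf_add[symmetric]
  by (rule embf_cong) (use assms in auto)

lemma emb_smult:
  assumes "A \<in> carrier_mat N N"
  shows "emb N (c \<cdot>\<^sub>m A) = embf N (\<lambda>i j. c * A $$ (i,j))"
  unfolding emb_def by (rule embf_cong) (use assms in auto)

definition E :: "nat \<Rightarrow> opr" where "E N = embf N (\<lambda>i j. if i = j then 1 else 0)"

lemma emb_one: "emb N (1\<^sub>m N) = E N"
  unfolding emb_def E_def by (rule embf_cong) auto

lemma emb_zero: "emb N (0\<^sub>m N N) = 0"
proof -
  have "emb N (0\<^sub>m N N) = embf N (\<lambda>i j. 0)" unfolding emb_def by (rule embf_cong) auto
  then show ?thesis by (simp add: embf_zero)
qed

lemma emb_msum: "emb N (msum N f I) = (\<Sum>j\<in>I. emb N (f j))"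
  unfolding emb_def embf_sum[symmetric] msum_def by (rule embf_cong) auto

lemma emb_pow:
  assumes "A \<in> carrier_mat N N"
  shows "emb N (A ^\<^sub>m Suc k) = (emb N A) ^ Suc k"
proof (induction k)
  case 0
  have "A ^\<^sub>m Suc 0 = 1\<^sub>m N * A" using assms by simp
  then show ?case using assms by (simp add: left_mult_one_mat)
next
  case (Suc k)
  have eq: "A ^\<^sub>m Suc (Suc k) = A ^\<^sub>m Suc k * A" by (rule pow_mat.simps(2))
  have "emb N (A ^\<^sub>m Suc (Suc k)) = emb N (A ^\<^sub>m Suc k) * emb N A"
    unfolding eq by (rule emb_mult[OF pow_carrier_mat[OF assms] assms])
  then show ?case unfolding Suc.IH by (simp only: power_Suc2[symmetric])
qed

lemma E_left: "E N * embf N g = embf N g"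
  unfolding E_def embf_mult by (rule embf_cong) (simp add: if_distrib[of "\<lambda>x. x * _"] cong: if_cong)

lemma E_right: "embf N g * E N = embf N g"
  unfolding E_def embf_mult by (rule embf_cong) (simp add: mult_delta_aux)

definition Q :: "nat \<Rightarrow> opr" where "Q N = 1 - E N"

lemma Q_left: "Q N * embf N g = 0"
  unfolding Q_def by (simp add: algebra_simps E_left)

lemma Q_right: "embf N g * Q N = 0"
  unfolding Q_def by (simp add: algebra_simps E_right)

lemma ent_Q: "i < N \<Longrightarrow> j < N \<Longrightarrow> ent i j (Q N) = 0"
proof -
  assume "i < N" "j < N"
  have "ent i j (Q N) + ent i j (E N) = ent i j 1" unfolding Q_def ent_add[symmetric] by simp
  then show "ent i j (Q N) = 0" using \<open>i < N\<close> \<open>j < N\<close> by (simp add: ent_one E_def ent_embf)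
qed


lemma embf_sums:
  assumes "\<And>i j. i < N \<Longrightarrow> j < N \<Longrightarrow> (\<lambda>k. g k i j) sums s i j"
  shows "(\<lambda>k. embf N (g k)) sums embf N s"
proof -
  have p: "(\<lambda>n. \<Sum>k<n. embf N (g k)) = (\<lambda>n. embf N (\<lambda>i j. \<Sum>k<n. g k i j))" by (simp add: embf_sum)
  have "((\<lambda>n. embf N (\<lambda>i j. \<Sum>k<n. g k i j) - embf N s) \<longlongrightarrow> 0) sequentially"
  proof (rule Lim_null_comparison)
    show "\<forall>\<^sub>F n in sequentially. norm (embf N (\<lambda>i j. \<Sum>k<n. g k i j) - embf N s) \<le> (\<Sum>i<N. \<Sum>j<N. cmod ((\<Sum>k<n. g k i j) - s i j))"
      by (intro always_eventually allI) (simp add: embf_diff[symmetric] norm_embf)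
    show "((\<lambda>n. \<Sum>i<N. \<Sum>j<N. cmod ((\<Sum>k<n. g k i j) - s i j)) \<longlongrightarrow> 0) sequentially"
    proof (intro tendsto_null_sum)
      fix i j assume "i \<in> {..<N}" "j \<in> {..<N}"
      then have "(\<lambda>n. \<Sum>k<n. g k i j) \<longlonglongrightarrow> s i j" using assms unfolding sums_def by auto
      then have "(\<lambda>n. (\<Sum>k<n. g k i j) - s i j) \<longlonglongrightarrow> 0" by (rule LIM_zero)
      then show "(\<lambda>n. cmod ((\<Sum>k<n. g k i j) - s i j)) \<longlonglongrightarrow> 0" by (rule tendsto_norm_zero)
    qed
  qed
  then show ?thesis unfolding sums_def p by (rule LIM_zero_cancel)
qed

lemma ent_zero: "ent i j 0 = 0"
  by (simp add: ent_def ap_zero)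

lemma exp_emb:
  assumes A: "A \<in> carrier_mat N N"
  shows "exp (emb N A) = Q N + emb N (mexp A)"
proof -
  define x where "x = emb N A"
  have trm: "x ^ k /\<^sub>R fact k = (if k = 0 then Q N else 0) + embf N (\<lambda>i j. (A ^\<^sub>m k) $$ (i,j) / of_nat (fact k))" for k
  proof (cases k)
    case 0
    have "embf N (\<lambda>i j. (A ^\<^sub>m k) $$ (i,j) / of_nat (fact k)) = emb N (1\<^sub>m N)"
      unfolding emb_def using 0 A by (intro embf_cong) auto
    then show ?thesis using 0 by (simp add: emb_one Q_def)
  next
    case (Suc k')
    have "x ^ k = emb N (A ^\<^sub>m k)" unfolding x_def Suc by (rule emb_pow[OF A, symmetric])
    then have "x ^ k /\<^sub>R fact k = inverse (fact k) *\<^sub>R emb N (A ^\<^sub>m k)" by simp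
    also have "\<dots> = embf N (\<lambda>i j. of_real (inverse (fact k)) * (A ^\<^sub>m k) $$ (i,j))"
      unfolding emb_def by (rule embf_scaleR[symmetric])
    also have "\<dots> = embf N (\<lambda>i j. (A ^\<^sub>m k) $$ (i,j) / of_nat (fact k))"
      by (intro embf_cong) (simp add: field_simps)
    finally show ?thesis using Suc by simp
  qed
  have s1: "(\<lambda>k. if k = 0 then Q N else 0) sums Q N" using sums_single[of 0 "\<lambda>_. Q N"] .
  have entsum: "(\<lambda>k. (A ^\<^sub>m k) $$ (i,j) / of_nat (fact k)) sums (mexp A $$ (i,j))" if ij: "i < N" "j < N" for i j
  proof -
    have "summable (\<lambda>k. ent i j (x ^ k /\<^sub>R fact k))"
      by (rule bounded_linear.summable[OF bl_ent summable_exp_generic])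
    moreover have "ent i j (x ^ k /\<^sub>R fact k) = (A ^\<^sub>m k) $$ (i,j) / of_nat (fact k)" for k
      unfolding trm ent_add using ij by (simp add: ent_Q ent_zero ent_embf)
    ultimately have "summable (\<lambda>k. (A ^\<^sub>m k) $$ (i,j) / of_nat (fact k))" by simp
    moreover have "mexp A $$ (i,j) = (\<Sum>k. (A ^\<^sub>m k) $$ (i,j) / of_nat (fact k))"
      using A ij by (simp add: mexp_def)
    ultimately show ?thesis by (simp add: summable_sums)
  qed
  have s2: "(\<lambda>k. embf N (\<lambda>i j. (A ^\<^sub>m k) $$ (i,j) / of_nat (fact k))) sums embf N (\<lambda>i j. mexp A $$ (i,j))"
    by (rule embf_sums) (rule entsum)
  have "(\<lambda>k. x ^ k /\<^sub>R fact k) sums (Q N + emb N (mexp A))"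
    unfolding trm emb_def by (rule sums_add[OF s1 s2])
  moreover have "(\<lambda>k. x ^ k /\<^sub>R fact k) sums exp x" by (rule exp_converges)
  ultimately show ?thesis unfolding x_def by (metis sums_unique2)
qed


lemma PP_entry:
  assumes "A \<in> carrier_mat N N" "B \<in> carrier_mat N N" "a < N" "b < N"
  shows "(\<Sum>r<N. A $$ (a,r) * B $$ (r,b)) = (A * B) $$ (a,b)"
  using assms by (auto simp: scalar_prod_def lessThan_atLeast0 intro!: sum.cong)

lemma pow_spec:
  fixes P :: "nat \<Rightarrow> complex mat" and al :: "nat \<Rightarrow> complex"
  assumes Pc: "\<And>j. j < m \<Longrightarrow> P j \<in> carrier_mat N N"
    and idem: "\<And>j. j < m \<Longrightarrow> P j * P j = P j"
    and orth: "\<And>j k. j < m \<Longrightarrow> k < m \<Longrightarrow> j \<noteq> k \<Longrightarrow> P j * P k = 0\<^sub>m N N"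
    and compl: "msum N P {..<m} = 1\<^sub>m N"
    and B: "B = mat N N (\<lambda>(a,b). \<Sum>l<m. al l * P l $$ (a,b))"
  shows "a < N \<Longrightarrow> b < N \<Longrightarrow> (B ^\<^sub>m k) $$ (a,b) = (\<Sum>l<m. al l ^ k * P l $$ (a,b))"
proof (induction k arbitrary: a b)
  case 0
  have "(B ^\<^sub>m 0) $$ (a,b) = (1\<^sub>m N) $$ (a,b)" using B by simp
  also have "\<dots> = msum N P {..<m} $$ (a,b)" using compl by simp
  also have "\<dots> = (\<Sum>l<m. P l $$ (a,b))" using 0 by (simp add: msum_def)
  finally show ?case by simp
next
  case (Suc k)
  have Bc: "B \<in> carrier_mat N N" using B by simp
  have PPe: "(\<Sum>r<N. P l $$ (a,r) * P l' $$ (r,b)) = (if l = l' then P l $$ (a,b) else 0)"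
    if "l < m" "l' < m" for l l'
  proof -
    have "(\<Sum>r<N. P l $$ (a,r) * P l' $$ (r,b)) = (P l * P l') $$ (a,b)"
      by (rule PP_entry) (use Pc that Suc.prems in auto)
    then show ?thesis using idem orth that Suc.prems by auto
  qed
  have "(B ^\<^sub>m Suc k) $$ (a,b) = (B ^\<^sub>m k * B) $$ (a,b)" by simp
  also have "\<dots> = (\<Sum>r<N. (B ^\<^sub>m k) $$ (a,r) * B $$ (r,b))"
    by (rule PP_entry[symmetric]) (use Bc Suc.prems in auto)
  also have "\<dots> = (\<Sum>r<N. (\<Sum>l<m. al l ^ k * P l $$ (a,r)) * (\<Sum>l'<m. al l' * P l' $$ (r,b)))"
    using Suc.IH Suc.prems B by (intro sum.cong) auto
  also have "\<dots> = (\<Sum>l<m. \<Sum>l'<m. al l ^ k * al l' * (\<Sum>r<N. P l $$ (a,r) * P l' $$ (r,b)))"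
    by (simp add: sum_distrib_left sum_distrib_right sum.swap[where A="{..<N}"] algebra_simps)
  also have "\<dots> = (\<Sum>l<m. \<Sum>l'<m. al l ^ k * al l' * (if l = l' then P l $$ (a,b) else 0))"
    using PPe by (intro sum.cong refl) auto
  also have "\<dots> = (\<Sum>l<m. al l ^ Suc k * P l $$ (a,b))"
    by (simp add: if_distrib[of "\<lambda>x. _ * x"] mult.commute mult.left_commute cong: if_cong)
  finally show ?case .
qed


lemma mexp_spec:
  fixes P :: "nat \<Rightarrow> complex mat" and al :: "nat \<Rightarrow> complex"
  assumes Pc: "\<And>j. j < m \<Longrightarrow> P j \<in> carrier_mat N N"
    and idem: "\<And>j. j < m \<Longrightarrow> P j * P j = P j"
    and orth: "\<And>j k. j < m \<Longrightarrow> k < m \<Longrightarrow> j \<noteq> k \<Longrightarrow> P j * P k = 0\<^sub>m N N"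
    and compl: "msum N P {..<m} = 1\<^sub>m N"
    and B: "B = mat N N (\<lambda>(a,b). \<Sum>l<m. al l * P l $$ (a,b))"
    and ab: "a < N" "b < N"
  shows "mexp B $$ (a,b) = (\<Sum>l<m. exp (al l) * P l $$ (a,b))"
proof -
  have "(\<lambda>k. (B ^\<^sub>m k) $$ (a,b) / of_nat (fact k)) sums (\<Sum>l<m. exp (al l) * P l $$ (a,b))"
  proof -
    have "(\<lambda>k. \<Sum>l<m. (al l ^ k /\<^sub>R fact k) * P l $$ (a,b)) sums (\<Sum>l<m. exp (al l) * P l $$ (a,b))"
      by (intro sums_sum sums_mult2 exp_converges)
    moreover have "(B ^\<^sub>m k) $$ (a,b) / of_nat (fact k) = (\<Sum>l<m. (al l ^ k /\<^sub>R fact k) * P l $$ (a,b))" for k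
      using pow_spec[OF Pc idem orth compl B ab] 
      by (simp add: sum_divide_distrib scaleR_conv_of_real field_simps)
    ultimately show ?thesis by simp
  qed
  moreover have "mexp B $$ (a,b) = (\<Sum>k. (B ^\<^sub>m k) $$ (a,b) / of_nat (fact k))"
    using B ab by (simp add: mexp_def)
  ultimately show ?thesis by (simp add: sums_iff)
qed


lemma mexp_carrier: "A \<in> carrier_mat N N \<Longrightarrow> mexp A \<in> carrier_mat N N"
  by (simp add: mexp_def)

lemma QQ: "Q N * Q N = Q N"
proof -
  have "Q N * E N = 0" unfolding E_def by (rule Q_left)
  then have "Q N * (1 - E N) = Q N" by (simp add: right_diff_distrib)
  then show ?thesis unfolding Q_def[symmetric] .
qed

lemma exp_prod_emb:
  assumes "A \<in> carrier_mat N N" "B \<in> carrier_mat N N"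
  shows "exp (emb N A) * exp (emb N B) = Q N + emb N (mexp A * mexp B)"
proof -
  have "exp (emb N A) * exp (emb N B) = (Q N + emb N (mexp A)) * (Q N + emb N (mexp B))"
    using assms by (simp add: exp_emb)
  also have "\<dots> = Q N * Q N + Q N * emb N (mexp B) + emb N (mexp A) * Q N + emb N (mexp A) * emb N (mexp B)"
    by (simp add: algebra_simps)
  also have "\<dots> = Q N + emb N (mexp A * mexp B)"
  proof -
    have "emb N (mexp A) * emb N (mexp B) = emb N (mexp A * mexp B)"
      by (rule emb_mult[symmetric]) (simp_all add: mexp_carrier assms)
    moreover have "Q N * emb N M = 0" "emb N M * Q N = 0" for M
      by (simp_all add: emb_def Q_left Q_right)
    ultimately show ?thesis by (simp add: QQ)
  qed
  finally show ?thesis .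
qed

lemma ent_Q_emb: "i < N \<Longrightarrow> j < N \<Longrightarrow> ent i j (Q N + emb N A) = A $$ (i,j)"
  by (simp add: ent_add ent_Q emb_def ent_embf)

definition cm :: "opr \<Rightarrow> opr \<Rightarrow> bool" where "cm c y \<longleftrightarrow> c * y = y * c"

lemma cm_mult: "cm c y \<Longrightarrow> cm c w \<Longrightarrow> cm c (y * w)"
  unfolding cm_def by (metis mult.assoc)

lemma cm_scaleR: "cm c y \<Longrightarrow> cm c (r *\<^sub>R y)"
  unfolding cm_def by (simp add: mult_scaleR_left mult_scaleR_right)

lemma cm_zero: "cm c 0" unfolding cm_def by simp

lemma cm_if: "cm c y \<Longrightarrow> cm c w \<Longrightarrow> cm c (if b then y else w)" by simp

lemma cm_sum: "(\<And>k. k \<in> K \<Longrightarrow> cm c (f k)) \<Longrightarrow> cm c (sum f K)"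
  unfolding cm_def by (simp add: sum_distrib_left sum_distrib_right)

lemma cm_diff: "cm c y \<Longrightarrow> cm c w \<Longrightarrow> cm c (y - w)"
  unfolding cm_def by (simp add: algebra_simps)

theorem lemma4:
  fixes N m :: nat
    and X Z :: "complex mat"
    and lam :: "nat \<Rightarrow> real"
    and P :: "nat \<Rightarrow> complex mat"
  assumes X_carrier: "X \<in> carrier_mat N N"
    and Z_carrier: "Z \<in> carrier_mat N N"
    and X_herm: "hermitian_mat X"
    and P_carrier: "\<And>j. j < m \<Longrightarrow> P j \<in> carrier_mat N N"
    and P_herm: "\<And>j. j < m \<Longrightarrow> hermitian_mat (P j)"
    and P_idem: "\<And>j. j < m \<Longrightarrow> P j * P j = P j"
    and P_nonzero: "\<And>j. j < m \<Longrightarrow> P j \<noteq> 0\<^sub>m N N"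
    and P_orth: "\<And>j k. j < m \<Longrightarrow> k < m \<Longrightarrow> j \<noteq> k \<Longrightarrow> P j * P k = 0\<^sub>m N N"
    and P_complete: "msum N P {..<m} = 1\<^sub>m N"
    and lam_distinct: "inj_on lam {..<m}"
    and X_spectral: "X = msum N (\<lambda>j. complex_of_real (lam j) \<cdot>\<^sub>m P j) {..<m}"
  shows "mat_tendsto N
           (\<lambda>\<kappa>::real. mexp (- (\<i> * complex_of_real \<kappa>) \<cdot>\<^sub>m X)
                        * mexp (\<i> \<cdot>\<^sub>m (complex_of_real \<kappa> \<cdot>\<^sub>m X + Z)))
           (mexp (\<i> \<cdot>\<^sub>m msum N (\<lambda>j. P j * Z * P j) {..<m}))
           at_top"
proof -
  define Dm where "Dm = msum N (\<lambda>j. P j * Z * P j) {..<m}"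
  define p where "p = (\<lambda>l. emb N (P l))"
  define zz where "zz = emb N Z"
  define x0 where "x0 = emb N X"
  define J where "J = embf N (\<lambda>a b. if a = b then \<i> else 0)"
  have Dmc: "Dm \<in> carrier_mat N N" unfolding Dm_def msum_def by simp
  have Jcomm: "cm J (embf N g)" for g
    unfolding cm_def J_def embf_mult
    by (rule embf_cong) (simp add: if_distrib[of "\<lambda>x. x * _"] if_distrib[of "\<lambda>x. _ * x"] mult.commute cong: if_cong)
  have Jemb: "emb N (\<i> \<cdot>\<^sub>m M) = J * emb N M" if "M \<in> carrier_mat N N" for M
    unfolding emb_smult[OF that] J_def emb_def embf_mult
    by (rule embf_cong) (use that in \<open>simp add: if_distrib[of "\<lambda>x. x * _"] cong: if_cong\<close>)
  have cmemb: "cm J (emb N M)" for M unfolding emb_def by (rule Jcomm)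
  have pp: "p l * p l' = (if l = l' then p l else 0)" if "l < m" "l' < m" for l l'
  proof -
    have "p l * p l' = emb N (P l * P l')" unfolding p_def
      by (rule emb_mult[symmetric]) (use P_carrier that in auto)
    then show ?thesis using P_idem P_orth that by (auto simp: emb_zero p_def)
  qed
  have psum: "(\<Sum>l<m. p l) = E N"
    using emb_msum[of N P "{..<m}"] P_complete by (simp add: emb_one p_def)
  have x0s: "x0 = (\<Sum>l<m. lam l *\<^sub>R p l)"
  proof -
    have "x0 = (\<Sum>l<m. emb N (complex_of_real (lam l) \<cdot>\<^sub>m P l))"
      unfolding x0_def by (subst X_spectral) (rule emb_msum)
    also have "\<dots> = (\<Sum>l<m. lam l *\<^sub>R p l)"
    proof (rule sum.cong[OF refl])
      fix l assume "l \<in> {..<m}"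
      then have "P l \<in> carrier_mat N N" using P_carrier by auto
      then have "emb N (complex_of_real (lam l) \<cdot>\<^sub>m P l) = embf N (\<lambda>i j. complex_of_real (lam l) * P l $$ (i,j))"
        by (rule emb_smult)
      also have "\<dots> = lam l *\<^sub>R p l" unfolding p_def emb_def by (rule embf_scaleR)
      finally show "emb N (complex_of_real (lam l) \<cdot>\<^sub>m P l) = lam l *\<^sub>R p l" .
    qed
    finally show ?thesis .
  qed
  have Ez: "E N * zz = zz" "zz * E N = zz" by (simp_all add: zz_def emb_def E_left E_right)
  define q where "q = (\<lambda>l l'. p l * zz * p l')"
  have zzdec: "zz = (\<Sum>l<m. \<Sum>l'<m. q l l')"
  proof -
    have "zz = E N * zz * E N" using Ez by simp
    also have "\<dots> = (\<Sum>l<m. p l) * zz * (\<Sum>l'<m. p l')" by (simp add: psum)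
    also have "\<dots> = (\<Sum>l<m. \<Sum>l'<m. q l l')" unfolding q_def by (simp add: sum_distrib_left sum_distrib_right) (rule sum.swap)
    finally show ?thesis .
  qed
  define D0 where "D0 = (\<Sum>l<m. q l l)"
  have DmD0: "emb N Dm = D0"
  proof -
    have "emb N Dm = (\<Sum>l<m. emb N (P l * Z * P l))" unfolding Dm_def by (rule emb_msum)
    also have "\<dots> = D0" unfolding D0_def q_def p_def zz_def
    proof (rule sum.cong[OF refl])
      fix l assume "l \<in> {..<m}"
      then have Pl: "P l \<in> carrier_mat N N" using P_carrier by auto
      then have "emb N (P l * Z * P l) = emb N (P l * Z) * emb N (P l)"
        using Z_carrier by (intro emb_mult) auto
      also have "\<dots> = emb N (P l) * emb N Z * emb N (P l)" using Pl Z_carrier by (simp add: emb_mult)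
      finally show "emb N (P l * Z * P l) = emb N (P l) * emb N Z * emb N (P l)" .
    qed
    finally show ?thesis .
  qed
  have xp: "x0 * p l = lam l *\<^sub>R p l" "p l * x0 = lam l *\<^sub>R p l" if "l < m" for l
  proof -
    have "x0 * p l = (\<Sum>l'<m. lam l' *\<^sub>R (p l' * p l))" unfolding x0s by (simp add: sum_distrib_right)
    also have "\<dots> = (\<Sum>l'<m. if l' = l then lam l *\<^sub>R p l else 0)"
      using pp that by (intro sum.cong) auto
    also have "\<dots> = lam l *\<^sub>R p l" using that by simp
    finally show "x0 * p l = lam l *\<^sub>R p l" .
    have "p l * x0 = (\<Sum>l'<m. lam l' *\<^sub>R (p l * p l'))" unfolding x0s by (simp add: sum_distrib_left)
    also have "\<dots> = (\<Sum>l'<m. if l = l' then lam l *\<^sub>R p l else 0)"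
      using pp that by (intro sum.cong) auto
    also have "\<dots> = lam l *\<^sub>R p l" using that by simp
    finally show "p l * x0 = lam l *\<^sub>R p l" .
  qed
  have xq: "x0 * q l l' = lam l *\<^sub>R q l l'" "q l l' * x0 = lam l' *\<^sub>R q l l'" if "l < m" "l' < m" for l l'
  proof -
    have "x0 * q l l' = (x0 * p l) * zz * p l'" unfolding q_def by (simp add: mult.assoc)
    then show "x0 * q l l' = lam l *\<^sub>R q l l'" using xp that unfolding q_def by simp
    have "q l l' * x0 = p l * zz * (p l' * x0)" unfolding q_def by (simp add: mult.assoc)
    then show "q l l' * x0 = lam l' *\<^sub>R q l l'" using xp that unfolding q_def by simp
  qed
  have xD: "x0 * D0 = D0 * x0"
    unfolding D0_def sum_distrib_left sum_distrib_right using xq by (intro sum.cong) auto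
  define a where "a = (\<Sum>l<m. \<Sum>l'<m. if l = l' then 0 else (1 / (lam l' - lam l)) *\<^sub>R q l l')"
  have rel0: "x0 * a - a * x0 = D0 - zz"
  proof -
    have "x0 * a - a * x0 = (\<Sum>l<m. \<Sum>l'<m. if l = l' then 0 else - q l l')"
    proof -
      have "x0 * a - a * x0 = (\<Sum>l<m. \<Sum>l'<m. (if l = l' then 0 else (1 / (lam l' - lam l)) *\<^sub>R (x0 * q l l'))
                 - (if l = l' then 0 else (1 / (lam l' - lam l)) *\<^sub>R (q l l' * x0)))"
        unfolding a_def sum_distrib_left sum_distrib_right sum_subtractf[symmetric]
        by (intro sum.cong refl) (simp add: mult_scaleR_right mult_scaleR_left)
      also have "\<dots> = (\<Sum>l<m. \<Sum>l'<m. if l = l' then 0 else - q l l')"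
      proof (intro sum.cong refl)
        fix l l' assume l: "l \<in> {..<m}" "l' \<in> {..<m}"
        show "(if l = l' then 0 else (1 / (lam l' - lam l)) *\<^sub>R (x0 * q l l'))
                 - (if l = l' then 0 else (1 / (lam l' - lam l)) *\<^sub>R (q l l' * x0))
              = (if l = l' then 0 else - q l l')"
        proof (cases "l = l'")
          case False
          then have ne: "lam l' - lam l \<noteq> 0" using lam_distinct l unfolding inj_on_def by auto
          have "(1 / (lam l' - lam l)) *\<^sub>R (lam l *\<^sub>R q l l') - (1 / (lam l' - lam l)) *\<^sub>R (lam l' *\<^sub>R q l l')
              = ((lam l - lam l') / (lam l' - lam l)) *\<^sub>R q l l'"
            by (simp add: scaleR_diff_left[symmetric] diff_divide_distrib)
          also have "(lam l - lam l') / (lam l' - lam l) = -1" using ne by (simp add: field_simps)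
          finally show ?thesis using False xq l by simp
        qed simp
      qed
      finally show ?thesis .
    qed
    also have "\<dots> = (\<Sum>l<m. \<Sum>l'<m. (if l = l' then q l l' else 0) - q l l')"
      by (intro sum.cong refl) auto
    also have "\<dots> = D0 - zz"
      unfolding sum_subtractf D0_def zzdec[symmetric] by simp
    finally show ?thesis .
  qed
  have cmp: "cm J (p l)" for l unfolding p_def by (rule cmemb)
  have cmz: "cm J zz" unfolding zz_def by (rule cmemb)
  have cmq: "cm J (q l l')" for l l' unfolding q_def by (intro cm_mult cmp cmz)
  have cma: "cm J a" unfolding a_def by (intro cm_sum cm_if cm_zero cm_scaleR cmq)
  have cmx0: "cm J x0" unfolding x0_def by (rule cmemb)
  have cmD0: "cm J D0" unfolding DmD0[symmetric] by (rule cmemb)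
  define x where "x = emb N (\<i> \<cdot>\<^sub>m X)"
  define z where "z = emb N (\<i> \<cdot>\<^sub>m Z)"
  define d where "d = emb N (\<i> \<cdot>\<^sub>m Dm)"
  have xJ: "x = J * x0" unfolding x_def x0_def by (rule Jemb[OF X_carrier])
  have zJ: "z = J * zz" unfolding z_def zz_def by (rule Jemb[OF Z_carrier])
  have dJ: "d = J * D0" unfolding d_def DmD0[symmetric] by (rule Jemb[OF Dmc])
  have rel: "x * a - a * x = d - z"
  proof -
    have "a * (J * x0) = J * (a * x0)" using cma unfolding cm_def by (metis mult.assoc)
    then have "x * a - a * x = J * (x0 * a - a * x0)" unfolding xJ by (simp add: mult.assoc right_diff_distrib)
    then show ?thesis unfolding rel0 dJ zJ by (simp add: right_diff_distrib)
  qed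
  have xd: "x * d = d * x"
  proof -
    have "x * d = J * J * (x0 * D0)" unfolding xJ dJ using cmx0 unfolding cm_def by (metis mult.assoc)
    moreover have "d * x = J * J * (D0 * x0)" unfolding xJ dJ using cmD0 unfolding cm_def by (metis mult.assoc)
    ultimately show ?thesis using xD by simp
  qed
  define C where "C = norm (Q N) + (\<Sum>a<N. \<Sum>b<N. \<Sum>l<m. cmod (P l $$ (a,b)))"
  have bnd: "norm (exp (t *\<^sub>R x)) \<le> C" for t
  proof -
    define al where "al = (\<lambda>l. \<i> * complex_of_real (t * lam l))"
    define Bt where "Bt = mat N N (\<lambda>(a,b). \<Sum>l<m. al l * P l $$ (a,b))"
    have Btc: "Bt \<in> carrier_mat N N" unfolding Bt_def by simp
    have Xe: "X $$ (a,b) = (\<Sum>l<m. complex_of_real (lam l) * P l $$ (a,b))" if "a < N" "b < N" for a b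
    proof -
      have "X $$ (a,b) = (\<Sum>l<m. (complex_of_real (lam l) \<cdot>\<^sub>m P l) $$ (a,b))"
        using that by (subst X_spectral) (simp add: msum_def)
      also have "\<dots> = (\<Sum>l<m. complex_of_real (lam l) * P l $$ (a,b))"
      proof (rule sum.cong[OF refl])
        fix l assume "l \<in> {..<m}"
        then have "P l \<in> carrier_mat N N" by (simp add: P_carrier)
        then show "(complex_of_real (lam l) \<cdot>\<^sub>m P l) $$ (a,b) = complex_of_real (lam l) * P l $$ (a,b)"
          using that by simp
      qed
      finally show ?thesis .
    qed
    have txe: "t *\<^sub>R x = emb N Bt"
    proof -
      have "t *\<^sub>R x = embf N (\<lambda>a b. complex_of_real t * (\<i> * X $$ (a,b)))"
        unfolding x_def emb_smult[OF X_carrier] embf_scaleR ..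
      also have "\<dots> = emb N Bt"
        unfolding emb_def Bt_def al_def
        by (rule embf_cong) (simp add: Xe sum_distrib_left algebra_simps)
      finally show ?thesis .
    qed
    have "exp (t *\<^sub>R x) = Q N + emb N (mexp Bt)" unfolding txe by (rule exp_emb[OF Btc])
    then have "norm (exp (t *\<^sub>R x)) \<le> norm (Q N) + norm (emb N (mexp Bt))"
      by (simp add: norm_triangle_ineq)
    also have "norm (emb N (mexp Bt)) \<le> (\<Sum>a<N. \<Sum>b<N. cmod (mexp Bt $$ (a,b)))"
      unfolding emb_def by (rule norm_embf)
    also have "\<dots> \<le> (\<Sum>a<N. \<Sum>b<N. \<Sum>l<m. cmod (P l $$ (a,b)))"
    proof (intro sum_mono)
      fix a b assume ab: "a \<in> {..<N}" "b \<in> {..<N}"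
      have "mexp Bt $$ (a,b) = (\<Sum>l<m. exp (al l) * P l $$ (a,b))"
        using ab by (intro mexp_spec[OF P_carrier P_idem P_orth P_complete Bt_def]) auto
      also have "cmod \<dots> \<le> (\<Sum>l<m. cmod (exp (al l) * P l $$ (a,b)))" by (rule norm_sum)
      also have "\<dots> = (\<Sum>l<m. cmod (P l $$ (a,b)))" by (simp add: al_def norm_mult)
      finally show "cmod (mexp Bt $$ (a,b)) \<le> (\<Sum>l<m. cmod (P l $$ (a,b)))" .
    qed
    finally show ?thesis unfolding C_def by simp
  qed
  have lim: "((\<lambda>\<kappa>. exp (- \<kappa> *\<^sub>R x) * exp (\<kappa> *\<^sub>R x + z)) \<longlongrightarrow> exp d) at_top"
    by (rule core[OF xd bnd rel])
  show ?thesis unfolding mat_tendsto_def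
  proof (intro allI impI)
    fix i j assume ij: "i < N" "j < N"
    have B1: "- (\<i> * complex_of_real \<kappa>) \<cdot>\<^sub>m X \<in> carrier_mat N N" for \<kappa> using X_carrier by simp
    have B2: "\<i> \<cdot>\<^sub>m (complex_of_real \<kappa> \<cdot>\<^sub>m X + Z) \<in> carrier_mat N N" for \<kappa> using X_carrier Z_carrier by simp
    have e1: "- \<kappa> *\<^sub>R x = emb N (- (\<i> * complex_of_real \<kappa>) \<cdot>\<^sub>m X)" for \<kappa>
    proof -
      have "- \<kappa> *\<^sub>R x = embf N (\<lambda>a b. complex_of_real (- \<kappa>) * (\<i> * X $$ (a,b)))"
        unfolding x_def emb_smult[OF X_carrier] embf_scaleR ..
      also have "\<dots> = emb N (- (\<i> * complex_of_real \<kappa>) \<cdot>\<^sub>m X)"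
        unfolding emb_smult[OF X_carrier] by (rule embf_cong) simp
      finally show ?thesis .
    qed
    have e2: "\<kappa> *\<^sub>R x + z = emb N (\<i> \<cdot>\<^sub>m (complex_of_real \<kappa> \<cdot>\<^sub>m X + Z))" for \<kappa>
    proof -
      have "\<kappa> *\<^sub>R x + z = embf N (\<lambda>a b. complex_of_real \<kappa> * (\<i> * X $$ (a,b))) + embf N (\<lambda>a b. \<i> * Z $$ (a,b))"
        unfolding x_def z_def emb_smult[OF X_carrier] emb_smult[OF Z_carrier] embf_scaleR ..
      also have "\<dots> = embf N (\<lambda>a b. complex_of_real \<kappa> * (\<i> * X $$ (a,b)) + \<i> * Z $$ (a,b))"
        by (rule embf_add[symmetric])
      also have "\<dots> = emb N (\<i> \<cdot>\<^sub>m (complex_of_real \<kappa> \<cdot>\<^sub>m X + Z))"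
        unfolding emb_def using X_carrier Z_carrier by (intro embf_cong) (simp add: algebra_simps)
      finally show ?thesis .
    qed
    have F: "ent i j (exp (- \<kappa> *\<^sub>R x) * exp (\<kappa> *\<^sub>R x + z))
        = (mexp (- (\<i> * complex_of_real \<kappa>) \<cdot>\<^sub>m X) * mexp (\<i> \<cdot>\<^sub>m (complex_of_real \<kappa> \<cdot>\<^sub>m X + Z))) $$ (i,j)" for \<kappa>
      unfolding e1 e2 exp_prod_emb[OF B1 B2] using ij by (rule ent_Q_emb)
    have L: "ent i j (exp d) = mexp (\<i> \<cdot>\<^sub>m Dm) $$ (i,j)"
      unfolding d_def exp_emb[of "\<i> \<cdot>\<^sub>m Dm" N, OF smult_carrier_mat[OF Dmc]] using ij by (rule ent_Q_emb)
    have "((\<lambda>\<kappa>. ent i j (exp (- \<kappa> *\<^sub>R x) * exp (\<kappa> *\<^sub>R x + z))) \<longlongrightarrow> ent i j (exp d)) at_top"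
      by (rule bounded_linear.tendsto[OF bl_ent lim])
    then show "((\<lambda>\<kappa>. (mexp (- (\<i> * complex_of_real \<kappa>) \<cdot>\<^sub>m X) * mexp (\<i> \<cdot>\<^sub>m (complex_of_real \<kappa> \<cdot>\<^sub>m X + Z))) $$ (i,j))
        \<longlongrightarrow> mexp (\<i> \<cdot>\<^sub>m msum N (\<lambda>j. P j * Z * P j) {..<m}) $$ (i,j)) at_top"
      unfolding F L Dm_def .
  qed
qed


end
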